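(* Let $r \ge 3$ be an integer, let $n \ge 1$, and let $q$ be a prime power with $q \ge n$. Let $g^{q\text{-}\mathrm{ff}}_r(n)$ be the maximum cardinality of a family $\mathcal{F} \subseteq [q]^n$ containing no $q$-ary focal family of size $r$. Then $g^{q\text{-}\mathrm{ff}}_r(n) \ge q^{\lceil \frac{(r-2)n}{r-1} \rceil}$.
   Context: Here $[q]=\{1,\dots,q\}$. A family $x^{(0)}, x^{(1)}, \dots, x^{(r-1)}$ of $r$ distinct vectors in $[q]^n$ is a ($q$-ary) focal family with focus $x^{(0)}$ if for every coordinate $i \in [n]$, at least $r-2$ of the $r-1$ entries $x^{(1)}_i, \dots, x^{(r-1)}_i$ are equal to $x^{(0)}_i$. A family contains a focal family of size $r$ if some $r$ distinct members, with some choice of focus among them, form a focal family. *)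

theory Defs
  imports Complex_Main "HOL-Number_Theory.Prime_Powers"
begin

definition qcube :: "nat \<Rightarrow> nat \<Rightarrow> (nat \<Rightarrow> nat) set" where
  "qcube q n = PiE {1..n} (\<lambda>_. {1..q})"

definition focal_family :: "nat \<Rightarrow> nat \<Rightarrow> nat \<Rightarrow> (nat \<Rightarrow> (nat \<Rightarrow> nat)) \<Rightarrow> bool" where
  "focal_family q n r x \<longleftrightarrow>
     (\<forall>j<r. x j \<in> qcube q n) \<and> inj_on x {..<r} \<and>
     (\<forall>i\<in>{1..n}. card {j \<in> {1..<r}. x j i = x 0 i} \<ge> r - 2)"

definition contains_focal :: "nat \<Rightarrow> nat \<Rightarrow> nat \<Rightarrow> (nat \<Rightarrow> nat) set \<Rightarrow> bool" where
  "contains_focal q n r F \<longleftrightarrow> (\<exists>x. focal_family q n r x \<and> x ` {..<r} \<subseteq> F)"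

definition g_qff :: "nat \<Rightarrow> nat \<Rightarrow> nat \<Rightarrow> nat" where
  "g_qff q r n = Max {card F | F. F \<subseteq> qcube q n \<and> \<not> contains_focal q n r F}"

end

theory Submission
  imports Defs "HOL-Algebra.Algebraic_Closure" "HOL-Number_Theory.Residues"
begin

lemma (in cring) binomial_ring:
  assumes x: "x \<in> carrier R" and y: "y \<in> carrier R"
  shows "(x \<oplus> y) [^] (n::nat) = (\<Oplus>k \<in> {..n}. [(n choose k)] \<cdot> (x [^] k \<otimes> y [^] (n - k)))"
proof (induction n)
  case 0
  then show ?case using x y by simp
next
  case (Suc n)
  define T where "T = (\<lambda>m k. [(m choose k)] \<cdot> (x [^] k \<otimes> y [^] (m - k)))"
  have Tc: "T m k \<in> carrier R" for m k unfolding T_def using x y by simp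
  define a where "a = (\<lambda>k. [(n choose k)] \<cdot> (x [^] (Suc k) \<otimes> y [^] (n - k)))"
  define b where "b = (\<lambda>k. [(n choose k)] \<cdot> (x [^] k \<otimes> y [^] (Suc n - k)))"
  define c where "c = (\<lambda>k. [(n choose (Suc k))] \<cdot> (x [^] (Suc k) \<otimes> y [^] (n - k)))"
  have ac: "a k \<in> carrier R" and bc: "b k \<in> carrier R" and cc: "c k \<in> carrier R" for k
    unfolding a_def b_def c_def using x y by simp_all
  have "(x \<oplus> y) [^] Suc n = (\<Oplus>k \<in> {..n}. T n k) \<otimes> (x \<oplus> y)"
    using Suc T_def by simp
  also have "\<dots> = (\<Oplus>k \<in> {..n}. T n k) \<otimes> x \<oplus> (\<Oplus>k \<in> {..n}. T n k) \<otimes> y"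
    using x y Tc by (simp add: r_distr)
  also have "(\<Oplus>k \<in> {..n}. T n k) \<otimes> x = (\<Oplus>k \<in> {..n}. a k)"
  proof -
    have "(\<Oplus>k \<in> {..n}. T n k) \<otimes> x = (\<Oplus>k \<in> {..n}. T n k \<otimes> x)"
      using finsum_ldistr[of "{..n}" x "T n"] x Tc by auto
    also have "\<dots> = (\<Oplus>k \<in> {..n}. a k)"
      apply (rule finsum_cong')
      using x y by (auto simp: T_def a_def add_pow_ldistr add_pow_rdistr m_ac nat_pow_Suc2)
    finally show ?thesis .
  qed
  also have "(\<Oplus>k \<in> {..n}. T n k) \<otimes> y = (\<Oplus>k \<in> {..n}. b k)"
  proof -
    have "(\<Oplus>k \<in> {..n}. T n k) \<otimes> y = (\<Oplus>k \<in> {..n}. T n k \<otimes> y)"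
      using finsum_ldistr[of "{..n}" y "T n"] y Tc by auto
    also have "\<dots> = (\<Oplus>k \<in> {..n}. b k)"
      apply (rule finsum_cong')
      using x y by (auto simp: T_def b_def add_pow_ldistr add_pow_rdistr m_ac Suc_diff_le nat_pow_Suc2)
    finally show ?thesis .
  qed
  also have "(\<Oplus>k \<in> {..n}. b k) = (\<Oplus>k \<in> {..n}. c k) \<oplus> b 0"
  proof (cases n)
    case 0
    then show ?thesis using bc cc by (simp add: c_def)
  next
    case (Suc m)
    have "(\<Oplus>k \<in> {..n}. b k) = (\<Oplus>k \<in> {..m}. b (Suc k)) \<oplus> b 0"
      using Suc finsum_Suc2[of b m] bc by auto
    also have "(\<Oplus>k \<in> {..m}. b (Suc k)) = (\<Oplus>k \<in> {..m}. c k)"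
      apply (rule finsum_cong') using Suc x y by (auto simp: b_def c_def)
    also have "\<dots> = (\<Oplus>k \<in> {..n}. c k)"
    proof -
      have "c n = \<zero>" by (simp add: c_def binomial_eq_0 add_pow_def)
      then show ?thesis using Suc finsum_Suc[of c m] cc by (simp add: Pi_def finsum_closed)
    qed
    finally show ?thesis .
  qed
  also have "(\<Oplus>k \<in> {..Suc n}. T (Suc n) k) = (\<Oplus>k \<in> {..n}. T (Suc n) (Suc k)) \<oplus> T (Suc n) 0"
    using finsum_Suc2[of "T (Suc n)" n] Tc by auto
  moreover have "(\<Oplus>k \<in> {..n}. T (Suc n) (Suc k)) = (\<Oplus>k \<in> {..n}. a k \<oplus> c k)"
    apply (rule finsum_cong')
    using x y by (auto simp: T_def a_def c_def add.nat_pow_mult)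
  moreover have "(\<Oplus>k \<in> {..n}. a k \<oplus> c k) = (\<Oplus>k \<in> {..n}. a k) \<oplus> (\<Oplus>k \<in> {..n}. c k)"
    using finsum_addf ac cc by auto
  moreover have "T (Suc n) 0 = b 0" by (simp add: T_def b_def)
  ultimately show ?case
    using ac bc cc by (simp add: a_assoc T_def finsum_closed)
qed

lemma (in cring) char_dvd_zero:
  assumes "[(p::nat)] \<cdot> \<one> = \<zero>" "z \<in> carrier R" "p dvd k"
  shows "[k] \<cdot> z = \<zero>"
proof -
  obtain m where k: "k = p * m" using assms(3) by auto
  have "[p] \<cdot> z = \<zero>"
    using add_pow_ldistr[of \<one> z p] assms by simp
  then have "[m] \<cdot> ([p] \<cdot> z) = \<zero>"
    using add.nat_pow_one by (simp add: add_pow_def)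
  moreover have "[m] \<cdot> ([p] \<cdot> z) = [k] \<cdot> z"
    unfolding k using assms(2) add.nat_pow_pow by simp
  ultimately show ?thesis by simp
qed

lemma (in cring) frobenius:
  assumes p: "Factorial_Ring.prime p" and c: "[(p::nat)] \<cdot> \<one> = \<zero>"
    and x: "x \<in> carrier R" and y: "y \<in> carrier R"
  shows "(x \<oplus> y) [^] p = x [^] p \<oplus> y [^] p"
proof -
  define f where "f = (\<lambda>k. [(p choose k)] \<cdot> (x [^] k \<otimes> y [^] (p - k)))"
  have fc: "f k \<in> carrier R" for k unfolding f_def using x y by simp
  have f0: "f k = \<zero>" if "0 < k" "k < p" for k
    unfolding f_def
    by (rule char_dvd_zero[OF c]) (use x y that p dvd_choose_prime in auto)
  obtain l where l: "p = Suc (Suc l)"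
    using prime_ge_2_nat[OF p] by (metis add_2_eq_Suc le_Suc_ex)
  have "(x \<oplus> y) [^] p = (\<Oplus>k \<in> {..p}. f k)"
    unfolding f_def using binomial_ring[OF x y] by simp
  also have "\<dots> = f p \<oplus> ((\<Oplus>k \<in> {..l}. f (Suc k)) \<oplus> f 0)"
    unfolding l using finsum_Suc[of f "Suc l"] finsum_Suc2[of f l] fc by (simp add: Pi_def)
  also have "(\<Oplus>k \<in> {..l}. f (Suc k)) = (\<Oplus>k \<in> {..l}. \<zero>)"
    by (rule finsum_cong') (use f0 l in auto)
  also have "\<dots> = \<zero>" by simp
  finally show ?thesis using x y fc by (simp add: f_def a_comm)
qed

lemma (in cring) frobenius_pow:
  assumes p: "Factorial_Ring.prime p" and c: "[(p::nat)] \<cdot> \<one> = \<zero>"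
    and x: "x \<in> carrier R" and y: "y \<in> carrier R"
  shows "(x \<oplus> y) [^] (p ^ e) = x [^] (p ^ e) \<oplus> y [^] (p ^ e)"
proof (induction e)
  case 0 then show ?case using x y by simp
next
  case (Suc e)
  have "(x \<oplus> y) [^] (p ^ Suc e) = ((x \<oplus> y) [^] (p ^ e)) [^] p"
    using x y by (simp add: nat_pow_pow mult.commute)
  also have "\<dots> = (x [^] (p ^ e)) [^] p \<oplus> (y [^] (p ^ e)) [^] p"
    using Suc frobenius[OF p c] x y by simp
  also have "\<dots> = x [^] (p ^ Suc e) \<oplus> y [^] (p ^ Suc e)"
    using x y by (simp add: nat_pow_pow mult.commute)
  finally show ?case .
qed

lemma (in ring_hom_ring) hom_add_pow_one:
  "h ([(n::nat)] \<cdot>\<^bsub>R\<^esub> \<one>\<^bsub>R\<^esub>) = [n] \<cdot>\<^bsub>S\<^esub> \<one>\<^bsub>S\<^esub>"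
proof (induction n)
  case 0 then show ?case by (simp add: add_pow_def)
next
  case (Suc n)
  have "[Suc n] \<cdot>\<^bsub>R\<^esub> \<one>\<^bsub>R\<^esub> = [n] \<cdot>\<^bsub>R\<^esub> \<one>\<^bsub>R\<^esub> \<oplus>\<^bsub>R\<^esub> \<one>\<^bsub>R\<^esub>"
    using R.add.nat_pow_Suc by simp
  moreover have "[Suc n] \<cdot>\<^bsub>S\<^esub> \<one>\<^bsub>S\<^esub> = [n] \<cdot>\<^bsub>S\<^esub> \<one>\<^bsub>S\<^esub> \<oplus>\<^bsub>S\<^esub> \<one>\<^bsub>S\<^esub>"
    using S.add.nat_pow_Suc by simp
  ultimately show ?case using Suc by simp
qed

context algebraic_closure
begin

lemma gf_card:
  assumes p: "Factorial_Ring.prime p" and c: "[(p::nat)] \<cdot> \<one> = \<zero>" and e: "e \<ge> 1"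
  shows "card {x \<in> carrier L. x [^] (p ^ e) = x} = p ^ e"
proof -
  define q where "q = p ^ e"
  have q2: "q \<ge> 2"
  proof -
    have "p \<le> p ^ e" using e prime_gt_1_nat[OF p] by (simp add: self_le_power)
    then show ?thesis using prime_ge_2_nat[OF p] q_def by simp
  qed
  interpret UP: domain "poly_ring L" using univ_poly_is_domain[OF carrier_is_subring] .
  have Ksub: "subring K L" using subfieldE(1)[OF subfield_axioms] .
  interpret UK: domain "K[X]" using univ_poly_is_domain[OF Ksub] .
  have XL: "X \<in> carrier (poly_ring L)" using var_closed(1)[OF carrier_is_subring] .
  have XK: "X \<in> carrier (K[X])" using var_closed(1)[OF Ksub] .
  interpret PC: ring_hom_ring L "poly_ring L" poly_of_const
    using canonical_embedding_ring_hom[OF carrier_is_subring] by simp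
  define P where "P = X [^]\<^bsub>poly_ring L\<^esub> q \<ominus>\<^bsub>poly_ring L\<^esub> X"
  have PL: "P \<in> carrier (poly_ring L)" unfolding P_def using XL by simp
  have powKL: "X [^]\<^bsub>K[X]\<^esub> q = X [^]\<^bsub>poly_ring L\<^esub> q"
    by (induction q) (simp_all add: univ_poly_def)
  have PK: "P \<in> carrier (K[X])"
  proof -
    have "X [^]\<^bsub>K[X]\<^esub> q \<ominus>\<^bsub>K[X]\<^esub> X \<in> carrier (K[X])" using XK by simp
    moreover have "X [^]\<^bsub>K[X]\<^esub> q \<ominus>\<^bsub>K[X]\<^esub> X = P"
      unfolding P_def powKL using univ_poly_a_minus_consistent[OF Ksub XK] by simp
    ultimately show ?thesis by simp
  qed
  have evalP: "eval P x = x [^] q \<ominus> x" if x: "x \<in> carrier L" for x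
  proof -
    interpret EV: ring_hom_ring "poly_ring L" L "\<lambda>p. eval p x"
      using eval_ring_hom[OF carrier_is_subring x] .
    show ?thesis
      unfolding P_def using XL x EV.hom_nat_pow eval_var[OF x] by (simp add: a_minus_def)
  qed
  have degX: "degree (X [^]\<^bsub>poly_ring L\<^esub> q) = q"
    using polynomial_pow_degree[OF XL, of q] by (simp add: var_def)
  have degP: "degree P = q"
  proof -
    have "degree (\<ominus>\<^bsub>poly_ring L\<^esub> X) = 1"
      using univ_poly_a_inv_degree[OF carrier_is_subring XL] by (simp add: var_def)
    moreover have PA: "P = ring.poly_add L (X [^]\<^bsub>poly_ring L\<^esub> q) (\<ominus>\<^bsub>poly_ring L\<^esub> X)"
      unfolding P_def a_minus_def by (simp add: univ_poly_add)
    moreover have h1: "polynomial (carrier L) (X [^]\<^bsub>poly_ring L\<^esub> q)"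
      using XL univ_poly_carrier by (metis UP.nat_pow_closed)
    moreover have h2: "polynomial (carrier L) (\<ominus>\<^bsub>poly_ring L\<^esub> X)"
      using XL univ_poly_carrier by (metis UP.add.inv_closed)
    ultimately show ?thesis
      using degX q2 poly_add_degree_eq[OF carrier_is_subring h1 h2] by (simp del: poly_add.simps)
  qed
  have PYfrob: "P = Y \<otimes>\<^bsub>poly_ring L\<^esub> (Y [^]\<^bsub>poly_ring L\<^esub> (q - 1) \<ominus>\<^bsub>poly_ring L\<^esub> \<one>\<^bsub>poly_ring L\<^esub>)"
    if a: "a \<in> carrier L" and aq: "a [^] q = a" and Ydef: "Y = X \<oplus>\<^bsub>poly_ring L\<^esub> poly_of_const (\<ominus> a)" for a Y
  proof -
    define C where "C = poly_of_const (\<ominus> a)"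
    have CL: "C \<in> carrier (poly_ring L)" unfolding C_def using a by simp
    have YL: "Y \<in> carrier (poly_ring L)" unfolding Ydef using XL a by simp
    have charP: "[p] \<cdot>\<^bsub>poly_ring L\<^esub> \<one>\<^bsub>poly_ring L\<^esub> = \<zero>\<^bsub>poly_ring L\<^esub>"
      using PC.hom_add_pow_one[of p] c by simp
    have na: "(\<ominus> a) [^] q = \<ominus> a"
    proof -
      have "(a \<oplus> \<ominus> a) [^] q = a [^] q \<oplus> (\<ominus> a) [^] q"
        using frobenius_pow[OF p c, of a "\<ominus> a" e] a q_def by simp
      then have "a \<oplus> (\<ominus> a) [^] q = \<zero>" using a aq q2 by (simp add: r_neg nat_pow_zero)
      then show ?thesis using a by (metis add.inv_closed minus_equality a_comm nat_pow_closed)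
    qed
    have "Y [^]\<^bsub>poly_ring L\<^esub> q = X [^]\<^bsub>poly_ring L\<^esub> q \<oplus>\<^bsub>poly_ring L\<^esub> C [^]\<^bsub>poly_ring L\<^esub> q"
      unfolding Ydef C_def q_def using UP.frobenius_pow[OF p charP XL] a by simp
    also have "C [^]\<^bsub>poly_ring L\<^esub> q = C"
      unfolding C_def using PC.hom_nat_pow[of "\<ominus> a" q] a na by simp
    finally have Yq: "Y [^]\<^bsub>poly_ring L\<^esub> q = X [^]\<^bsub>poly_ring L\<^esub> q \<oplus>\<^bsub>poly_ring L\<^esub> C" .
    have "Y [^]\<^bsub>poly_ring L\<^esub> q = Y \<otimes>\<^bsub>poly_ring L\<^esub> Y [^]\<^bsub>poly_ring L\<^esub> (q - 1)"
    proof -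
      have qs: "Suc (q - 1) = q" using q2 by simp
      show ?thesis using UP.nat_pow_Suc2[OF YL, of "q - 1"] by (simp only: qs)
    qed
    then have "Y \<otimes>\<^bsub>poly_ring L\<^esub> (Y [^]\<^bsub>poly_ring L\<^esub> (q - 1) \<ominus>\<^bsub>poly_ring L\<^esub> \<one>\<^bsub>poly_ring L\<^esub>)
        = Y [^]\<^bsub>poly_ring L\<^esub> q \<ominus>\<^bsub>poly_ring L\<^esub> Y"
      using YL by (simp add: UP.r_minus UP.r_distr a_minus_def)
    also have "\<dots> = P"
    proof -
      have X1: "X [^]\<^bsub>poly_ring L\<^esub> q \<in> carrier (poly_ring L)" using XL by simp
      have YC: "Y = X \<oplus>\<^bsub>poly_ring L\<^esub> C" using Ydef C_def by simp
      show ?thesis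
      unfolding Yq unfolding YC P_def a_minus_def using XL CL X1
      by (simp add: UP.minus_add UP.a_assoc UP.r_neg2 UP.r_neg1 UP.a_comm UP.a_lcomm)
    qed
    finally show ?thesis by simp
  qed
  have Pne: "P \<noteq> []" using degP q2 by auto
  have mult1: "alg_mult P a \<le> 1" for a
  proof (rule ccontr)
    assume A: "\<not> alg_mult P a \<le> 1"
    then have a: "a \<in> carrier L" using PL by (auto simp: alg_mult_def split: if_splits)
    have "is_root P a" using alg_mult_gt_zero_iff_is_root[OF PL, of a] A by simp
    then have "eval P a = \<zero>" by (simp add: is_root_def)
    then have aq: "a [^] q = a" using evalP[OF a] a
      by (metis a_minus_def add.inv_closed minus_equality r_neg nat_pow_closed minus_minus)
    define Y where "Y = X \<oplus>\<^bsub>poly_ring L\<^esub> poly_of_const (\<ominus> a)"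
    have YL: "Y \<in> carrier (poly_ring L)" unfolding Y_def using XL a by simp
    have Yeq: "Y = [\<one>, \<ominus> a]"
      unfolding Y_def var_def poly_of_const_def univ_poly_add using a by auto
    have "[\<one>, \<ominus> a] [^]\<^bsub>poly_ring L\<^esub> (2::nat) pdivides P"
      using le_alg_mult_imp_pdivides[OF a PL, of 2] A by simp
    then obtain W where W: "W \<in> carrier (poly_ring L)"
      and PW: "P = (Y [^]\<^bsub>poly_ring L\<^esub> (2::nat)) \<otimes>\<^bsub>poly_ring L\<^esub> W"
      unfolding pdivides_def factor_def Yeq by auto
    define U where "U = Y [^]\<^bsub>poly_ring L\<^esub> (q - 1) \<ominus>\<^bsub>poly_ring L\<^esub> \<one>\<^bsub>poly_ring L\<^esub>"
    have UL: "U \<in> carrier (poly_ring L)" unfolding U_def using YL by simp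
    have "Y \<otimes>\<^bsub>poly_ring L\<^esub> U = Y \<otimes>\<^bsub>poly_ring L\<^esub> (Y \<otimes>\<^bsub>poly_ring L\<^esub> W)"
      using PYfrob[OF a aq Y_def] PW YL W unfolding U_def
      by (simp add: UP.m_assoc numeral_2_eq_2)
    moreover have "Y \<noteq> \<zero>\<^bsub>poly_ring L\<^esub>" using Yeq by (simp add: univ_poly_zero)
    ultimately have UYW: "U = Y \<otimes>\<^bsub>poly_ring L\<^esub> W"
      using UP.m_lcancel YL UL W by simp
    interpret EV: ring_hom_ring "poly_ring L" L "\<lambda>p. eval p a"
      using eval_ring_hom[OF carrier_is_subring a] .
    have eY: "eval Y a = \<zero>" using a by (simp add: Yeq r_neg)
    have "eval U a = \<zero>" using UYW eY YL W a by (simp add: eval_in_carrier)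
    moreover have "eval U a = \<ominus> \<one>"
      unfolding U_def using YL eY q2 by (simp add: EV.hom_nat_pow nat_pow_zero a_minus_def)
    ultimately show False by simp
  qed
  have fin: "finite {x. is_root P x}" using finite_number_of_roots[OF PL] .
  have roots_eq: "roots P = mset_set {x. is_root P x}"
  proof (rule multiset_eqI)
    fix x
    have "count (roots P) x = alg_mult P x" using alg_mult_eq_count_roots[OF PL] by simp
    moreover have "alg_mult P x = (if is_root P x then 1 else 0)"
      using mult1[of x] alg_mult_gt_zero_iff_is_root[OF PL, of x] by auto
    ultimately show "count (roots P) x = count (mset_set {x. is_root P x}) x"
      using fin by simp
  qed
  have "size (roots P) = q" using roots_over_subfield[OF PK] degP by (simp add: splitted_def)
  then have "card {x. is_root P x} = q" using roots_eq by simp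
  moreover have "{x. is_root P x} = {x \<in> carrier L. x [^] (p ^ e) = x}"
  proof -
    have "eval P x = \<zero> \<longleftrightarrow> x [^] q = x" if x: "x \<in> carrier L" for x
      using evalP[OF x] x
      by (metis a_minus_def add.inv_closed minus_equality r_neg nat_pow_closed minus_minus)
    then show ?thesis using Pne q_def by (auto simp: is_root_def)
  qed
  ultimately show ?thesis using q_def by simp
qed

end

lemma (in residues) res_add_pow_one: "[(n::nat)] \<cdot> \<one> = int n mod m"
proof (induction n)
  case 0 then show ?case by (simp add: add_pow_def res_zero_eq)
next
  case (Suc n)
  have "[Suc n] \<cdot> \<one> = [n] \<cdot> \<one> \<oplus> \<one>" using add.nat_pow_Suc by simp
  then show ?case using Suc by (simp add: res_add_eq res_one_eq mod_add_left_eq add.commute[of 1])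
qed

lemma gf_exists:
  assumes p: "Factorial_Ring.prime p" and e: "e \<ge> 1"
  shows "\<exists>L :: ((int list \<times> nat) multiset \<Rightarrow> int) ring. field L \<and>
           card {x \<in> carrier L. x [^]\<^bsub>L\<^esub> (p ^ e) = x} = p ^ e \<and> [p] \<cdot>\<^bsub>L\<^esub> \<one>\<^bsub>L\<^esub> = \<zero>\<^bsub>L\<^esub>"
proof -
  interpret R: residues_prime p "residue_ring (int p)" by unfold_locales (rule p)
  obtain L :: "((int list \<times> nat) multiset \<Rightarrow> int) ring"
    where cl: "algebraic_closure L (R.indexed_const ` (carrier (residue_ring (int p))))"
      and hom: "R.indexed_const \<in> ring_hom (residue_ring (int p)) L"
    using R.exists_closure by blast
  interpret C: algebraic_closure L "R.indexed_const ` (carrier (residue_ring (int p)))" by (rule cl)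
  interpret H: ring_hom_ring "residue_ring (int p)" L R.indexed_const
    using hom by unfold_locales
  have "[p] \<cdot>\<^bsub>residue_ring (int p)\<^esub> \<one>\<^bsub>residue_ring (int p)\<^esub> = \<zero>\<^bsub>residue_ring (int p)\<^esub>"
    using R.res_add_pow_one[of p] by (simp add: R.res_zero_eq)
  then have c: "[p] \<cdot>\<^bsub>L\<^esub> \<one>\<^bsub>L\<^esub> = \<zero>\<^bsub>L\<^esub>"
    using H.hom_add_pow_one[of p] by simp
  show ?thesis
    using C.gf_card[OF p c e] c C.field_axioms by blast
qed

lemma (in cring) frob_closed:
  assumes p: "Factorial_Ring.prime p" and c: "[(p::nat)] \<cdot> \<one> = \<zero>"
    and x: "x \<in> carrier R" and y: "y \<in> carrier R"
    and xq: "x [^] (p ^ e) = x" and yq: "y [^] (p ^ e) = y"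
  shows "(x \<oplus> y) [^] (p ^ e) = x \<oplus> y" and "(x \<otimes> y) [^] (p ^ e) = x \<otimes> y"
  using frobenius_pow[OF p c x y, of e] xq yq x y by (simp_all add: nat_pow_distrib)

lemma card_set_mset_le_size: "card (set_mset M) \<le> size M"
  by (induction M) (auto simp: card_insert_if)

lemma (in ring) normalize_nil_zero: "normalize cs = [] \<Longrightarrow> set cs \<subseteq> {\<zero>}"
  by (induction cs) (auto split: if_splits)

lemma (in cring) eval_map2_minus:
  assumes "length cs = length ds" "set cs \<subseteq> carrier R" "set ds \<subseteq> carrier R" "x \<in> carrier R"
  shows "eval (map2 (\<lambda>a b. a \<ominus> b) cs ds) x = eval cs x \<ominus> eval ds x"
  using assms
proof (induction cs ds rule: list_induct2)
  case Nil then show ?case by (simp add: a_minus_def)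
next
  case (Cons a cs b ds)
  have ec: "eval cs x \<in> carrier R" "eval ds x \<in> carrier R"
    using Cons eval_in_carrier by auto
  have ab: "a \<in> carrier R" "b \<in> carrier R" using Cons by auto
  have "eval (map2 (\<lambda>a b. a \<ominus> b) (a # cs) (b # ds)) x
      = (a \<ominus> b) \<otimes> x [^] length cs \<oplus> (eval cs x \<ominus> eval ds x)"
    using Cons by simp
  also have "\<dots> = (a \<otimes> x [^] length cs \<oplus> eval cs x) \<ominus> (b \<otimes> x [^] length ds \<oplus> eval ds x)"
  proof -
    have xx: "x [^] length ds \<in> carrier R" using Cons.prems by simp
    show ?thesis using ec ab xx Cons.hyps by (simp add: a_minus_def l_distr l_minus minus_add a_ac)
  qed
  finally show ?case using Cons by simp
qed

lemma (in field) roots_bound: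
  assumes cs: "set cs \<subseteq> carrier R" and A: "A \<subseteq> carrier R" "finite A"
    and len: "length cs \<le> card A" and z: "\<forall>x\<in>A. eval cs x = \<zero>"
  shows "set cs \<subseteq> {\<zero>}"
proof (rule ccontr)
  assume nz: "\<not> set cs \<subseteq> {\<zero>}"
  define P where "P = normalize cs"
  have Pne: "P \<noteq> []"
  proof
    assume "P = []" then show False using normalize_nil_zero[of cs] nz P_def by simp
  qed
  have PL: "P \<in> carrier (poly_ring R)"
    using normalize_gives_polynomial[OF cs] univ_poly_carrier P_def by blast
  have "A \<subseteq> {x. is_root P x}"
    using z A Pne eval_normalize[OF cs] P_def by (auto simp: is_root_def)
  then have "card A \<le> card {x. is_root P x}"
    using finite_number_of_roots[OF PL] card_mono by blast
  also have "{x. is_root P x} = set_mset (roots P)"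
    using roots_mem_iff_is_root[OF PL] by auto
  also have "card (set_mset (roots P)) \<le> size (roots P)" by (rule card_set_mset_le_size)
  also have "\<dots> \<le> degree P" by (rule size_roots_le_degree[OF PL])
  also have "\<dots> < length cs"
  proof -
    have "length P \<ge> 1" using Pne by (cases P) auto
    then show ?thesis using normalize_length_le[of cs] P_def by simp
  qed
  finally show False using len by simp
qed

lemma (in field) agree_bound:
  assumes cs: "set cs \<subseteq> carrier R" and ds: "set ds \<subseteq> carrier R"
    and len: "length cs = k" "length ds = k"
    and inj: "inj_on \<alpha> I" and al: "\<alpha> ` I \<subseteq> carrier R" and fin: "finite I"
    and ag: "card {i \<in> I. eval cs (\<alpha> i) = eval ds (\<alpha> i)} \<ge> k"
  shows "cs = ds"
proof -
  define J where "J = {i \<in> I. eval cs (\<alpha> i) = eval ds (\<alpha> i)}"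
  define D where "D = map2 (\<lambda>a b. a \<ominus> b) cs ds"
  have csi: "cs ! i \<in> carrier R" "ds ! i \<in> carrier R" if "i < k" for i
    using cs ds len that nth_mem by (metis subsetD)+
  have Dc: "set D \<subseteq> carrier R" unfolding D_def using csi len
    by (auto simp: set_zip intro!: minus_closed)
  have "set D \<subseteq> {\<zero>}"
  proof (rule roots_bound[OF Dc, of "\<alpha> ` J"])
    show "\<alpha> ` J \<subseteq> carrier R" using al J_def by auto
    show "finite (\<alpha> ` J)" using fin J_def by simp
    have "card (\<alpha> ` J) = card J" using inj J_def by (auto intro: card_image inj_on_subset)
    then show "length D \<le> card (\<alpha> ` J)" using ag len D_def J_def by simp
    show "\<forall>x\<in>\<alpha> ` J. eval D x = \<zero>"
      using eval_map2_minus[OF _ cs ds] len al J_def D_def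
      by (auto simp: eval_in_carrier cs ds)
  qed
  then have "\<forall>i < k. cs ! i \<ominus> ds ! i = \<zero>"
    using len D_def by (auto simp: set_conv_nth)
  then have "\<forall>i < k. cs ! i = ds ! i"
    using cs ds len
    by (metis a_minus_def add.inv_closed minus_equality r_neg nth_mem subsetD minus_minus)
  then show ?thesis using len by (simp add: nth_equalityI)
qed

lemma (in field) code_in_field:
  assumes SR: "S \<subseteq> carrier R" and Sfin: "finite S" and Scard: "card S = q"
    and S0: "\<zero> \<in> S" and S1: "\<one> \<in> S"
    and Sadd: "\<And>x y. x \<in> S \<Longrightarrow> y \<in> S \<Longrightarrow> x \<oplus> y \<in> S"
    and Smul: "\<And>x y. x \<in> S \<Longrightarrow> y \<in> S \<Longrightarrow> x \<otimes> y \<in> S"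
    and nq: "n \<le> q" and kn: "k \<le> n"
  shows "\<exists>F. F \<subseteq> qcube q n \<and> card F = q ^ k \<and>
             (\<forall>x\<in>F. \<forall>y\<in>F. x \<noteq> y \<longrightarrow> card {i\<in>{1..n}. x i = y i} < k)"
proof -
  obtain h where h: "bij_betw h {1..q} S" using ex_bij_betw_nat_finite_1[OF Sfin] Scard by auto
  define \<beta> where "\<beta> = inv_into {1..q} h"
  have \<beta>: "bij_betw \<beta> S {1..q}" unfolding \<beta>_def using h by (rule bij_betw_inv_into)
  define \<alpha> where "\<alpha> = h"
  have \<alpha>inj: "inj_on \<alpha> {1..n}" using h nq unfolding \<alpha>_def bij_betw_def
    by (auto intro: inj_on_subset)
  have \<alpha>S: "\<alpha> ` {1..n} \<subseteq> S" using h nq unfolding \<alpha>_def bij_betw_def by auto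
  have powS: "x [^] (m::nat) \<in> S" if "x \<in> S" for x m
    by (induction m) (use S1 Smul that in auto)
  have evalS: "eval cs x \<in> S" if "set cs \<subseteq> S" "x \<in> S" for cs x
    using that by (induction cs) (auto simp: S0 Sadd Smul powS)
  define Cs where "Cs = {cs. set cs \<subseteq> S \<and> length cs = k}"
  define word where "word = (\<lambda>cs. restrict (\<lambda>i. \<beta> (eval cs (\<alpha> i))) {1..n})"
  define F where "F = word ` Cs"
  have agree: "cs = ds" if cs: "cs \<in> Cs" and ds: "ds \<in> Cs"
      and ag: "card {i\<in>{1..n}. word cs i = word ds i} \<ge> k" for cs ds
  proof -
    have "{i\<in>{1..n}. word cs i = word ds i} = {i\<in>{1..n}. eval cs (\<alpha> i) = eval ds (\<alpha> i)}"
    proof -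
      have "\<beta> (eval cs (\<alpha> i)) = \<beta> (eval ds (\<alpha> i)) \<longleftrightarrow> eval cs (\<alpha> i) = eval ds (\<alpha> i)"
        if "i \<in> {1..n}" for i
      proof -
        have ai: "\<alpha> i \<in> S" using \<alpha>S that by auto
        have "eval cs (\<alpha> i) \<in> S" "eval ds (\<alpha> i) \<in> S"
          using evalS[OF _ ai] cs ds unfolding Cs_def by auto
        then show ?thesis using inj_on_eq_iff[OF bij_betw_imp_inj_on[OF \<beta>]] by blast
      qed
      then show ?thesis unfolding word_def by auto
    qed
    then show ?thesis
      using agree_bound[of cs ds k \<alpha> "{1..n}"] cs ds ag SR \<alpha>inj \<alpha>S unfolding Cs_def by auto
  qed
  have "F \<subseteq> qcube q n"
  proof
    fix x assume "x \<in> F"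
    then obtain cs where cs: "cs \<in> Cs" and x: "x = word cs" unfolding F_def by auto
    have "\<beta> (eval cs (\<alpha> i)) \<in> {1..q}" if "i \<in> {1..n}" for i
    proof -
      have ai: "\<alpha> i \<in> S" using \<alpha>S that by auto
      have "eval cs (\<alpha> i) \<in> S" using evalS[OF _ ai] cs unfolding Cs_def by auto
      then show ?thesis using bij_betw_apply[OF \<beta>] by blast
    qed
    then show "x \<in> qcube q n" unfolding x word_def qcube_def by auto
  qed
  moreover have "card F = q ^ k"
  proof -
    have "inj_on word Cs"
    proof (rule inj_onI)
      fix cs ds assume "cs \<in> Cs" "ds \<in> Cs" "word cs = word ds"
      then have "{i\<in>{1..n}. word cs i = word ds i} = {1..n}" by auto
      then show "cs = ds" using agree[of cs ds] kn \<open>cs \<in> Cs\<close> \<open>ds \<in> Cs\<close> by simp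
    qed
    then have "card F = card Cs" unfolding F_def by (rule card_image)
    also have "\<dots> = q ^ k" unfolding Cs_def using card_lists_length_eq[OF Sfin] Scard by simp
    finally show ?thesis .
  qed
  moreover have "\<forall>x\<in>F. \<forall>y\<in>F. x \<noteq> y \<longrightarrow> card {i\<in>{1..n}. x i = y i} < k"
    using agree unfolding F_def by (auto simp: not_less[symmetric])
  ultimately show ?thesis by blast
qed

lemma code_exists:
  assumes q: "primepow q" and nq: "n \<le> q" and kn: "k \<le> n"
  shows "\<exists>F. F \<subseteq> qcube q n \<and> card F = q ^ k \<and>
             (\<forall>x\<in>F. \<forall>y\<in>F. x \<noteq> y \<longrightarrow> card {i\<in>{1..n}. x i = y i} < k)"
proof -
  obtain p e where p: "Factorial_Ring.prime p" and e: "e > 0" and qpe: "q = p ^ e"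
    using q unfolding primepow_def by auto
  obtain L :: "((int list \<times> nat) multiset \<Rightarrow> int) ring" where
    L: "field L" and card: "card {x \<in> carrier L. x [^]\<^bsub>L\<^esub> (p ^ e) = x} = p ^ e"
    and c: "[p] \<cdot>\<^bsub>L\<^esub> \<one>\<^bsub>L\<^esub> = \<zero>\<^bsub>L\<^esub>"
    using gf_exists[OF p, of e] e by auto
  interpret L: field L by (rule L)
  define S where "S = {x \<in> carrier L. x [^]\<^bsub>L\<^esub> (p ^ e) = x}"
  have qpos: "q > 0" using qpe p prime_gt_0_nat by simp
  have Sfin: "finite S"
  proof -
    have "card S > 0" using card qpe qpos S_def by simp
    then show ?thesis by (rule card_ge_0_finite)
  qed
  show ?thesis
  proof (rule L.code_in_field[of S q n k])
    show "S \<subseteq> carrier L" unfolding S_def by auto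
    show "finite S" by (rule Sfin)
    show "card S = q" using card S_def qpe by simp
    show "\<zero>\<^bsub>L\<^esub> \<in> S" unfolding S_def using p L.nat_pow_zero prime_gt_0_nat by simp
    show "\<one>\<^bsub>L\<^esub> \<in> S" unfolding S_def by simp
    show "x \<oplus>\<^bsub>L\<^esub> y \<in> S" if "x \<in> S" "y \<in> S" for x y
    proof -
      have x: "x \<in> carrier L" "x [^]\<^bsub>L\<^esub> (p ^ e) = x" using that(1) unfolding S_def by auto
      have y: "y \<in> carrier L" "y [^]\<^bsub>L\<^esub> (p ^ e) = y" using that(2) unfolding S_def by auto
      show ?thesis using L.frob_closed(1)[OF p c x(1) y(1) x(2) y(2)] x y unfolding S_def by simp
    qed
    show "x \<otimes>\<^bsub>L\<^esub> y \<in> S" if "x \<in> S" "y \<in> S" for x y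
    proof -
      have x: "x \<in> carrier L" "x [^]\<^bsub>L\<^esub> (p ^ e) = x" using that(1) unfolding S_def by auto
      have y: "y \<in> carrier L" "y [^]\<^bsub>L\<^esub> (p ^ e) = y" using that(2) unfolding S_def by auto
      show ?thesis using L.frob_closed(2)[OF p c x(1) y(1) x(2) y(2)] x y unfolding S_def by simp
    qed
  qed (use nq kn in auto)
qed

lemma ceil_facts:
  fixes r n :: nat
  assumes r: "r \<ge> 3"
  defines "k \<equiv> nat \<lceil>real ((r - 2) * n) / real (r - 1)\<rceil>"
  shows "k \<le> n" and "(r - 1) * k < (r - 2) * n + (r - 1)"
proof -
  define x where "x = real ((r - 2) * n) / real (r - 1)"
  have r1: "real (r - 1) > 0" using r by simp
  have x0: "x \<ge> 0" unfolding x_def by simp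
  have "(r - 2) * n \<le> (r - 1) * n" by (rule mult_le_mono1) simp
  then have "real ((r - 2) * n) \<le> real n * real (r - 1)"
    by (metis of_nat_le_iff of_nat_mult mult.commute)
  then have xn: "x \<le> real n" unfolding x_def using r1 by (simp add: divide_le_eq)
  have kx: "real k = of_int \<lceil>x\<rceil>" unfolding k_def x_def[symmetric] using x0 by simp
  have "\<lceil>x\<rceil> \<le> int n" using ceiling_le[of x "int n"] xn by simp
  then show "k \<le> n" unfolding k_def x_def[symmetric] using xn by simp
  have "of_int \<lceil>x\<rceil> < x + 1" using ceiling_correct[of x] by linarith
  then have "real k < x + 1" using kx by simp
  then have "real k * real (r - 1) < (x + 1) * real (r - 1)" using r1 by (simp add: mult_strict_right_mono)
  also have "\<dots> = real ((r - 2) * n) + real (r - 1)"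
    unfolding x_def using r1 by (simp add: field_simps)
  finally have A: "real k * real (r - 1) < real ((r - 2) * n) + real (r - 1)" .
  have B: "real ((r - 1) * k) = real k * real (r - 1)" by (simp only: of_nat_mult mult.commute)
  have C: "real ((r - 2) * n + (r - 1)) = real ((r - 2) * n) + real (r - 1)" by (simp only: of_nat_add)
  have "real ((r - 1) * k) < real ((r - 2) * n + (r - 1))" using A B C by linarith
  then show "(r - 1) * k < (r - 2) * n + (r - 1)" by (simp only: of_nat_less_iff)
qed

theorem proposition3p2:
  fixes r n q :: nat
  assumes "r \<ge> 3" and "n \<ge> 1" and "primepow q" and "q \<ge> n"
  shows "g_qff q r n \<ge> q ^ nat \<lceil>real ((r - 2) * n) / real (r - 1)\<rceil>"
proof -
  define k where "k = nat \<lceil>real ((r - 2) * n) / real (r - 1)\<rceil>"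
  have kn: "k \<le> n" unfolding k_def by (rule ceil_facts(1)[OF assms(1)])
  have kbound: "(r - 1) * k < (r - 2) * n + (r - 1)" unfolding k_def by (rule ceil_facts(2)[OF assms(1)])
  obtain F where FQ: "F \<subseteq> qcube q n" and cardF: "card F = q ^ k"
    and dist: "\<forall>x\<in>F. \<forall>y\<in>F. x \<noteq> y \<longrightarrow> card {i\<in>{1..n}. x i = y i} < k"
    using code_exists[OF assms(3) assms(4) kn] by blast
  have nofocal: "\<not> contains_focal q n r F"
  proof
    assume "contains_focal q n r F"
    then obtain x where ff: "focal_family q n r x" and xF: "x ` {..<r} \<subseteq> F"
      unfolding contains_focal_def by blast
    have inj: "inj_on x {..<r}" and cond: "\<forall>i\<in>{1..n}. card {j \<in> {1..<r}. x j i = x 0 i} \<ge> r - 2"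
      using ff unfolding focal_family_def by auto
    define D where "D = (\<lambda>j. {i\<in>{1..n}. x j i \<noteq> x 0 i})"
    have r0: "0 < r" using assms(1) by simp
    have cardD: "card (D j) \<ge> n - k + 1" if j: "j \<in> {1..<r}" for j
    proof -
      have jr: "j \<in> {..<r}" "0 \<in> {..<r}" "j \<noteq> 0" using j r0 by auto
      have "x j \<noteq> x 0" using inj_on_eq_iff[OF inj jr(1,2)] jr(3) by simp
      moreover have "x j \<in> F" "x 0 \<in> F" using xF j r0 by auto
      ultimately have lt: "card {i\<in>{1..n}. x j i = x 0 i} < k" using dist by blast
      define A where "A = {i\<in>{1..n}. x j i = x 0 i}"
      have DA: "D j = {1..n} - A" unfolding D_def A_def by auto
      have Asub: "A \<subseteq> {1..n}" unfolding A_def by auto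
      have Afin: "finite A" using Asub finite_subset by blast
      have "card (D j) = n - card A" unfolding DA using card_Diff_subset[OF Afin Asub] by simp
      then have "card (D j) = n - card {i\<in>{1..n}. x j i = x 0 i}" unfolding A_def .
      then show ?thesis using lt kn by linarith
    qed
    have disj: "D j \<inter> D j' = {}" if "j \<in> {1..<r}" "j' \<in> {1..<r}" "j \<noteq> j'" for j j'
    proof (rule ccontr)
      assume "D j \<inter> D j' \<noteq> {}"
      then obtain i where i: "i \<in> {1..n}" "x j i \<noteq> x 0 i" "x j' i \<noteq> x 0 i"
        unfolding D_def by auto
      have "{j'' \<in> {1..<r}. x j'' i = x 0 i} \<subseteq> {1..<r} - {j, j'}" using i by auto
      then have "card {j'' \<in> {1..<r}. x j'' i = x 0 i} \<le> card ({1..<r} - {j, j'})"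
        by (rule card_mono[rotated]) simp
      also have "\<dots> = (r - 1) - 2" using that by (simp add: card_Diff_subset)
      finally have "card {j'' \<in> {1..<r}. x j'' i = x 0 i} < r - 2" using assms(1) by linarith
      moreover have "card {j'' \<in> {1..<r}. x j'' i = x 0 i} \<ge> r - 2" using cond i(1) by blast
      ultimately show False by linarith
    qed
    have "(\<Sum>j\<in>{1..<r}. card (D j)) = card (\<Union>j\<in>{1..<r}. D j)"
    proof (rule card_UN_disjoint[symmetric])
      show "\<forall>i\<in>{1..<r}. \<forall>j\<in>{1..<r}. i \<noteq> j \<longrightarrow> D i \<inter> D j = {}" using disj by blast
    qed (auto simp: D_def)
    also have "\<dots> \<le> card {1..n}"
      by (rule card_mono) (auto simp: D_def)
    finally have le: "(\<Sum>j\<in>{1..<r}. card (D j)) \<le> n" by simp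
    have "(\<Sum>j\<in>{1..<r}. n - k + 1) \<le> (\<Sum>j\<in>{1..<r}. card (D j))"
      by (rule sum_mono) (use cardD in auto)
    then have ge: "(r - 1) * (n - k + 1) \<le> n" using le by simp
    have nk: "(n - k + 1) + k = n + 1" using kn by simp
    have "(r - 1) * (n - k + 1) + (r - 1) * k = (r - 1) * ((n - k + 1) + k)"
      by (simp only: add_mult_distrib2)
    also have "\<dots> = (r - 1) * n + (r - 1)" unfolding nk by simp
    finally have e1: "(r - 1) * (n - k + 1) + (r - 1) * k = (r - 1) * n + (r - 1)" .
    have r21: "r - 1 = (r - 2) + 1" using assms(1) by simp
    have e2: "(r - 2) * n + n = (r - 1) * n"
      unfolding r21 by (simp only: add_mult_distrib mult_1)
    show False using ge kbound e1 e2 by linarith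
  qed
  have fin: "finite {card F | F. F \<subseteq> qcube q n \<and> \<not> contains_focal q n r F}"
  proof -
    have "finite (qcube q n)" unfolding qcube_def by (simp add: finite_PiE)
    then have "finite (card ` Pow (qcube q n))" by simp
    moreover have "{card F | F. F \<subseteq> qcube q n \<and> \<not> contains_focal q n r F} \<subseteq> card ` Pow (qcube q n)"
      by auto
    ultimately show ?thesis by (rule finite_subset[rotated])
  qed
  have "card F \<le> g_qff q r n"
    unfolding g_qff_def using fin FQ nofocal by (auto intro: Max_ge)
  then show ?thesis using cardF k_def by simp
qed

end
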